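(* Let $\mathcal{X}$ be a finite set, $\mathcal{B}$ any set of strategies and $l:\mathcal{B}\times\mathcal{X}\to\mathbb{R}$ a loss function. Define the set of optimizing strategies $$\mathcal{B}_{\mathrm{opt}}=\Big\{\arg\min_{b\in\mathcal{B}}\sum_{x\in\mathcal{X}}\lambda(x)l(b,x):\ \lambda(x)\ge0\ \forall x,\ \exists x:\lambda(x)>0\Big\},$$ and suppose $R=\sup_{x\in\mathcal{X},b\in\mathcal{B}_{\mathrm{opt}}}l(b,x)<\infty$ (the loss need only be bounded on $\mathcal{B}_{\mathrm{opt}}$). For a sequence $x_1,x_2,\ldots\in\mathcal{X}$ let $N_t(x)$ be the number of $i\le t$ with $x_i=x$; let $(h_t)$ be non-decreasing and positive, $u_t(x)$ i.i.d. uniform on $[0,1]$, $P^{(u)}_t(x)=\frac{N_{t-1}(x)+h_tu_t(x)}{t-1+h_t\sum_{x'}u_t(x')}$ and $\hat b_t=\arg\min_{b\in\mathcal{B}}\sum_xP^{(u)}_t(x)l(b,x)$. With $\hat L_n=\sum_{t=1}^nl(\hat b_t,x_t)$, $L_n^*=\min_b\sum_{t=1}^nl(b,x_t)$ and $\overline{\mathcal{R}}_{\max}=\max_{x_1^n}\mathbb{E}[\hat L_n-L_n^*]$, the following hold: (1) $\overline{\mathcal{R}}_{\max}\le 2R\sum_{t=1}^nh_t^{-1}+2R|\mathcal{X}|h_n$; (2) for $h_t=h_1t^\alpha$, $h_1>0$, $\alpha\in(0,1)$, $\overline{\mathcal{R}}_{\max}/n\to0$; (3) for $h_t=\sqrt{2t/|\mathcal{X}|}$,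 $\overline{\mathcal{R}}_{\max}/n\le4R\sqrt{2|\mathcal{X}|/n}$. In particular these hold for the squared loss $l(\mathbf b,\mathbf x)=\|\mathbf b-\mathbf x\|^2$ with finite $\mathcal{X}\subset\mathbb{R}^d$ and $\mathcal{B}=\mathbb{R}^d$, with $R=\max_{\mathbf x,\mathbf x'\in\mathcal{X}}\|\mathbf x-\mathbf x'\|^2$.
   Context: The minimizers are assumed to be attained; the expectation is over the random dither $u_t$. The loss function is fixed over time. *)

theory Defs
  imports "HOL-Probability.Probability"
begin

definition weights_ok :: "'x set \<Rightarrow> ('x \<Rightarrow> real) \<Rightarrow> bool" where
  "weights_ok X w \<longleftrightarrow> (\<forall>x\<in>X. 0 \<le> w x) \<and> (\<exists>x\<in>X. 0 < w x)"

definition wloss :: "'x set \<Rightarrow> ('b \<Rightarrow> 'x \<Rightarrow> real) \<Rightarrow> ('x \<Rightarrow> real) \<Rightarrow> 'b \<Rightarrow> real" where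
  "wloss X l w b = (\<Sum>x\<in>X. w x * l b x)"

definition argmin_set :: "'x set \<Rightarrow> 'b set \<Rightarrow> ('b \<Rightarrow> 'x \<Rightarrow> real) \<Rightarrow> ('x \<Rightarrow> real) \<Rightarrow> 'b set" where
  "argmin_set X B l w = {b\<in>B. \<forall>b'\<in>B. wloss X l w b \<le> wloss X l w b'}"

definition Bopt :: "'x set \<Rightarrow> 'b set \<Rightarrow> ('b \<Rightarrow> 'x \<Rightarrow> real) \<Rightarrow> 'b set" where
  "Bopt X B l = (\<Union>w\<in>{w. weights_ok X w}. argmin_set X B l w)"

definition Rbound :: "'x set \<Rightarrow> 'b set \<Rightarrow> ('b \<Rightarrow> 'x \<Rightarrow> real) \<Rightarrow> real" where
  "Rbound X B l = Sup {l b x | b x. b \<in> Bopt X B l \<and> x \<in> X}"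

definition Ncount :: "(nat \<Rightarrow> 'x) \<Rightarrow> nat \<Rightarrow> 'x \<Rightarrow> nat" where
  "Ncount xs t x = card {i\<in>{1..t}. xs i = x}"

definition Pu :: "'x set \<Rightarrow> (nat \<Rightarrow> real) \<Rightarrow> (nat \<Rightarrow> 'x) \<Rightarrow> nat \<Rightarrow> ('x \<Rightarrow> real) \<Rightarrow> 'x \<Rightarrow> real" where
  "Pu X h xs t u = (\<lambda>x\<in>X. (real (Ncount xs (t - 1) x) + h t * u x)
                         / (real (t - 1) + h t * (\<Sum>x'\<in>X. u x')))"

definition dither :: "'x set \<Rightarrow> ('x \<Rightarrow> real) measure" where
  "dither X = PiM X (\<lambda>_. uniform_measure lborel {0..1::real})"

definition dither_seq :: "'x set \<Rightarrow> nat \<Rightarrow> (nat \<Rightarrow> 'x \<Rightarrow> real) measure" where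
  "dither_seq X n = PiM {1..n} (\<lambda>_. dither X)"

text \<open>sel is a (tie-breaking) choice of argmin, which exists for every admissible weight
  vector (minimisers attained), and the resulting strategies are random variables.\<close>
definition selector :: "'x set \<Rightarrow> 'b set \<Rightarrow> ('b \<Rightarrow> 'x \<Rightarrow> real) \<Rightarrow> (('x \<Rightarrow> real) \<Rightarrow> 'b) \<Rightarrow> bool" where
  "selector X B l sel \<longleftrightarrow>
     (\<forall>w. weights_ok X w \<longrightarrow> sel w \<in> argmin_set X B l w) \<and>
     (\<forall>h xs t x. (\<forall>s\<ge>1. 0 < h s) \<longrightarrow> 1 \<le> t \<longrightarrow> x \<in> X \<longrightarrow>
        (\<lambda>u. l (sel (Pu X h xs t u)) x) \<in> borel_measurable (dither X))"

definition Lhat :: "'x set \<Rightarrow> ('b \<Rightarrow> 'x \<Rightarrow> real) \<Rightarrow> (('x \<Rightarrow> real) \<Rightarrow> 'b) \<Rightarrow> (nat \<Rightarrow> real)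
    \<Rightarrow> (nat \<Rightarrow> 'x) \<Rightarrow> nat \<Rightarrow> (nat \<Rightarrow> 'x \<Rightarrow> real) \<Rightarrow> real" where
  "Lhat X l sel h xs n U = (\<Sum>t=1..n. l (sel (Pu X h xs t (U t))) (xs t))"

text \<open>L_n^* = min over B (the minimum is attained by assumption).\<close>
definition Lstar :: "'b set \<Rightarrow> ('b \<Rightarrow> 'x \<Rightarrow> real) \<Rightarrow> (nat \<Rightarrow> 'x) \<Rightarrow> nat \<Rightarrow> real" where
  "Lstar B l xs n = (INF b\<in>B. \<Sum>t=1..n. l b (xs t))"

definition exp_regret :: "'x set \<Rightarrow> 'b set \<Rightarrow> ('b \<Rightarrow> 'x \<Rightarrow> real) \<Rightarrow> (('x \<Rightarrow> real) \<Rightarrow> 'b)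
    \<Rightarrow> (nat \<Rightarrow> real) \<Rightarrow> (nat \<Rightarrow> 'x) \<Rightarrow> nat \<Rightarrow> real" where
  "exp_regret X B l sel h xs n =
     (\<integral>U. (Lhat X l sel h xs n U - Lstar B l xs n) \<partial>dither_seq X n)"

definition regret_max :: "'x set \<Rightarrow> 'b set \<Rightarrow> ('b \<Rightarrow> 'x \<Rightarrow> real) \<Rightarrow> (('x \<Rightarrow> real) \<Rightarrow> 'b)
    \<Rightarrow> (nat \<Rightarrow> real) \<Rightarrow> nat \<Rightarrow> real" where
  "regret_max X B l sel h n =
     Max ((\<lambda>xs. exp_regret X B l sel h xs n) ` ({1..n} \<rightarrow>\<^sub>E X))"

definition regret_bounds :: "'x set \<Rightarrow> 'b set \<Rightarrow> ('b \<Rightarrow> 'x \<Rightarrow> real) \<Rightarrow> (('x \<Rightarrow> real) \<Rightarrow> 'b)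
    \<Rightarrow> real \<Rightarrow> bool" where
  "regret_bounds X B l sel R \<longleftrightarrow>
     (\<forall>h. (\<forall>t\<ge>1. 0 < h t) \<longrightarrow> (\<forall>s t. 1 \<le> s \<longrightarrow> s \<le> t \<longrightarrow> h s \<le> h t) \<longrightarrow>
        (\<forall>n\<ge>1. regret_max X B l sel h n
                 \<le> 2 * R * (\<Sum>t=1..n. 1 / h t) + 2 * R * real (card X) * h n)) \<and>
     (\<forall>h1 \<alpha>. 0 < h1 \<longrightarrow> 0 < \<alpha> \<longrightarrow> \<alpha> < 1 \<longrightarrow>
        (\<lambda>n. regret_max X B l sel (\<lambda>t. h1 * real t powr \<alpha>) n / real n) \<longlonglongrightarrow> 0) \<and>
     (\<forall>n\<ge>1. regret_max X B l sel (\<lambda>t. sqrt (2 * real t / real (card X))) n / real n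
              \<le> 4 * R * sqrt (2 * real (card X) / real n))"

end

theory Submission imports Defs begin
lemma intU:
  fixes f :: "real \<Rightarrow> real"
  assumes [measurable]: "f \<in> borel_measurable borel"
  shows "integral\<^sup>L (uniform_measure lborel {0..1}) f = (\<integral>x. indicator {0..1} x * f x \<partial>lborel)"
proof -
  have "uniform_measure lborel {0..1::real} = density lborel (\<lambda>x. ennreal (indicator {0..1} x))"
    unfolding uniform_measure_def by (intro arg_cong[where f="density lborel"]) (auto simp: fun_eq_iff indicator_def of_bool_def)
  then show ?thesis by (simp add: integral_density)
qed

lemma integrable_ind_bdd:
  fixes g :: "real \<Rightarrow> real"
  assumes [measurable]: "g \<in> borel_measurable borel" and "\<And>x. \<bar>g x\<bar> \<le> R"
  shows "integrable lborel (\<lambda>x. indicator {a..b} x * g x)"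
proof (rule Bochner_Integration.integrable_bound)
  show "integrable lborel (\<lambda>x. R * indicator {a..b} x)"
    by (intro integrable_mult_right integrable_real_indicator) (auto simp: emeasure_lborel_Icc_eq)
  show "AE x in lborel. norm (indicator {a..b} x * g x) \<le> norm (R * indicator {a..b} x)"
  proof (rule AE_I2)
    fix x have "\<bar>g x\<bar> \<le> \<bar>R\<bar>" using assms(2)[of x] by linarith
    then show "norm (indicator {a..b} x * g x) \<le> norm (R * indicator {a..b} x)"
      by (simp add: indicator_def abs_mult)
  qed
qed simp

lemma shift1:
  fixes \<psi> :: "real \<Rightarrow> real"
  assumes [measurable]: "\<psi> \<in> borel_measurable borel" and b: "\<And>s. 0 \<le> \<psi> s \<and> \<psi> s \<le> R" and d: "0 \<le> \<delta>"
  shows "integral\<^sup>L (uniform_measure lborel {0..1}) \<psi>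
     \<le> (\<integral>s. \<psi> (s + \<delta>) \<partial>uniform_measure lborel {0..1}) + R * \<delta>"
proof -
  have bb: "\<And>x. \<bar>\<psi> x\<bar> \<le> R" using b by (metis abs_of_nonneg)
  have bb2: "\<And>x. \<bar>\<psi> (x + \<delta>)\<bar> \<le> R" using bb by blast
  have "(\<integral>s. \<psi> (s + \<delta>) \<partial>uniform_measure lborel {0..1}) = (\<integral>x. indicator {0..1} x * \<psi> (x + \<delta>) \<partial>lborel)"
    by (rule intU) simp
  also have "\<dots> = (\<integral>x. indicator {0..1} (x - \<delta>) * \<psi> x \<partial>lborel)"
    using lborel_integral_real_affine[of 1 "\<lambda>x. indicator {0..1} (x - \<delta>) * \<psi> x" \<delta>]
    by (simp add: add.commute)
  also have "\<dots> = (\<integral>x. indicator {\<delta>..1+\<delta>} x * \<psi> x \<partial>lborel)"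
    by (intro Bochner_Integration.integral_cong) (auto simp: indicator_def)
  finally have e1: "(\<integral>s. \<psi> (s + \<delta>) \<partial>uniform_measure lborel {0..1}) = (\<integral>x. indicator {\<delta>..1+\<delta>} x * \<psi> x \<partial>lborel)" .
  have "integral\<^sup>L (uniform_measure lborel {0..1}) \<psi> = (\<integral>x. indicator {0..1} x * \<psi> x \<partial>lborel)"
    by (rule intU) simp
  also have "\<dots> \<le> (\<integral>x. indicator {\<delta>..1+\<delta>} x * \<psi> x + R * indicator {0..\<delta>} x \<partial>lborel)"
  proof (rule integral_mono)
    show "integrable lborel (\<lambda>x. indicator {0..1} x * \<psi> x)" by (rule integrable_ind_bdd[OF _ bb]) simp
    show "integrable lborel (\<lambda>x. indicator {\<delta>..1+\<delta>} x * \<psi> x + R * indicator {0..\<delta>} x)"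
    proof (rule Bochner_Integration.integrable_add)
      show "integrable lborel (\<lambda>x. indicator {\<delta>..1+\<delta>} x * \<psi> x)" by (rule integrable_ind_bdd[OF _ bb]) simp
      show "integrable lborel (\<lambda>x. R * indicator {0..\<delta>} x :: real)"
        by (intro integrable_mult_right integrable_real_indicator) (auto simp: emeasure_lborel_Icc_eq)
    qed
    fix x show "indicator {0..1} x * \<psi> x \<le> indicator {\<delta>..1+\<delta>} x * \<psi> x + R * indicator {0..\<delta>} x"
      using b[of x] d by (auto simp: indicator_def)
  qed
  also have "\<dots> = (\<integral>x. indicator {\<delta>..1+\<delta>} x * \<psi> x \<partial>lborel) + R * \<delta>"
  proof -
    have i1: "integrable lborel (\<lambda>x. indicator {\<delta>..1+\<delta>} x * \<psi> x)" by (rule integrable_ind_bdd[OF _ bb]) simp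
    have i2: "integrable lborel (\<lambda>x. R * indicator {0..\<delta>} x :: real)"
      by (intro integrable_mult_right integrable_real_indicator) (auto simp: emeasure_lborel_Icc_eq)
    have "(\<integral>x. R * indicator {0..\<delta>} x \<partial>lborel) = R * \<delta>" using d by simp
    then show ?thesis using Bochner_Integration.integral_add[OF i1 i2] by simp
  qed
  finally show ?thesis using e1 by simp
qed

abbreviation "UU \<equiv> uniform_measure lborel {0..1::real}"

lemma prob_UU: "prob_space UU"
  by (rule prob_space_uniform_measure) (auto simp: emeasure_lborel_Icc_eq)

lemma prob_dither: "prob_space (dither X)"
  unfolding dither_def by (rule prob_space_PiM) (rule prob_UU)

lemma shiftPi:
  fixes X :: "'x set" and \<phi> :: "('x \<Rightarrow> real) \<Rightarrow> real"
  assumes X: "x0 \<in> X" and phim[measurable]: "\<phi> \<in> borel_measurable (dither X)"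
    and b: "\<And>u. 0 \<le> \<phi> u \<and> \<phi> u \<le> R" and d: "0 \<le> \<delta>"
  shows "integral\<^sup>L (dither X) \<phi> \<le> (\<integral>u. \<phi> (u(x0 := u x0 + \<delta>)) \<partial>dither X) + R * \<delta>"
proof -
  define I where "I = X - {x0}"
  define P where "P = PiM I (\<lambda>_. UU)"
  have XI: "X = insert x0 I" using X unfolding I_def by auto
  interpret U: prob_space UU by (rule prob_UU)
  interpret P: prob_space P unfolding P_def by (rule prob_space_PiM) (rule prob_UU)
  interpret UP: pair_sigma_finite UU P ..
  interpret UP': prob_space "UU \<Otimes>\<^sub>M P" by (rule prob_space_pair) unfold_locales
  have D: "dither X = distr (UU \<Otimes>\<^sub>M P) (dither X) (\<lambda>(x, Y). Y(x0 := x))"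
    unfolding dither_def P_def XI by (rule distr_pair_PiM_eq_PiM[symmetric]) (auto intro: prob_UU)
  have mupd[measurable]: "(\<lambda>(x, Y). Y(x0 := x)) \<in> measurable (UU \<Otimes>\<^sub>M P) (dither X)"
    unfolding dither_def P_def XI by measurable
  have sU: "sets UU = sets borel" by simp
  have eq: "integral\<^sup>L (dither X) g = (\<integral>Y. (\<integral>x. g (Y(x0 := x)) \<partial>UU) \<partial>P)"
    and intg: "integrable P (\<lambda>Y. \<integral>x. g (Y(x0 := x)) \<partial>UU)"
    if gm[measurable]: "g \<in> borel_measurable (dither X)" and gb: "\<And>u. \<bar>g u\<bar> \<le> R" for g :: "_ \<Rightarrow> real"
  proof -
    have int: "integrable (UU \<Otimes>\<^sub>M P) (\<lambda>(x, Y). g (Y(x0 := x)))"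
      by (rule UP'.integrable_const_bound[where B=R]) (auto simp: gb)
    have "integral\<^sup>L (dither X) g = integral\<^sup>L (UU \<Otimes>\<^sub>M P) (\<lambda>(x, Y). g (Y(x0 := x)))"
      by (subst D) (simp add: integral_distr case_prod_beta')
    also have "\<dots> = (\<integral>Y. (\<integral>x. g (Y(x0 := x)) \<partial>UU) \<partial>P)"
      using UP.integral_snd[of "\<lambda>x Y. g (Y(x0 := x))"] int by simp
    finally show "integral\<^sup>L (dither X) g = (\<integral>Y. (\<integral>x. g (Y(x0 := x)) \<partial>UU) \<partial>P)" .
    show "integrable P (\<lambda>Y. \<integral>x. g (Y(x0 := x)) \<partial>UU)"
      using UP.integrable_snd[of "\<lambda>x Y. g (Y(x0 := x))"] int by simp
  qed
  have bb: "\<And>u. \<bar>\<phi> u\<bar> \<le> R" using b by (metis abs_of_nonneg)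
  have mT: "(\<lambda>u. u(x0 := u x0 + \<delta>)) \<in> measurable (dither X) (dither X)"
  proof -
    have "(\<lambda>w i. (w(x0 := w x0 + \<delta>)) i) \<in> measurable (PiM X (\<lambda>_. UU)) (PiM X (\<lambda>_. UU))"
    proof (rule measurable_PiM_single')
      fix i assume "i \<in> X"
      show "(\<lambda>w. (w(x0 := w x0 + \<delta>)) i) \<in> measurable (PiM X (\<lambda>_. UU)) UU"
      proof (cases "i = x0")
        case True then show ?thesis using X by simp
      next
        case False then show ?thesis using \<open>i \<in> X\<close> by simp
      qed
    next
      show "(\<lambda>w i. (w(x0 := w x0 + \<delta>)) i) \<in> space (PiM X (\<lambda>_. UU)) \<rightarrow> (\<Pi>\<^sub>E i\<in>X. space UU)"
        using X by (auto simp: space_PiM PiE_iff extensional_def)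
    qed
    then show ?thesis by (simp add: dither_def fun_upd_def)
  qed
  have mS[measurable]: "(\<lambda>u. \<phi> (u(x0 := u x0 + \<delta>))) \<in> borel_measurable (dither X)"
    using measurable_compose[OF mT phim] by (simp add: comp_def)
  have e1: "integral\<^sup>L (dither X) \<phi> = (\<integral>Y. (\<integral>x. \<phi> (Y(x0 := x)) \<partial>UU) \<partial>P)" by (rule eq) (auto simp: bb)
  have e2: "(\<integral>u. \<phi> (u(x0 := u x0 + \<delta>)) \<partial>dither X) = (\<integral>Y. (\<integral>x. \<phi> (Y(x0 := x + \<delta>)) \<partial>UU) \<partial>P)"
    using eq[of "\<lambda>u. \<phi> (u(x0 := u x0 + \<delta>))"] by (simp add: bb)
  have i1: "integrable P (\<lambda>Y. \<integral>x. \<phi> (Y(x0 := x)) \<partial>UU)" by (rule intg) (auto simp: bb)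
  have i2: "integrable P (\<lambda>Y. \<integral>x. \<phi> (Y(x0 := x + \<delta>)) \<partial>UU)"
    using intg[of "\<lambda>u. \<phi> (u(x0 := u x0 + \<delta>))"] by (simp add: bb)
  have "(\<integral>Y. (\<integral>x. \<phi> (Y(x0 := x)) \<partial>UU) \<partial>P) \<le> (\<integral>Y. (\<integral>x. \<phi> (Y(x0 := x + \<delta>)) \<partial>UU) + R * \<delta> \<partial>P)"
  proof (rule integral_mono_AE[OF i1])
    show "integrable P (\<lambda>Y. (\<integral>x. \<phi> (Y(x0 := x + \<delta>)) \<partial>UU) + R * \<delta>)" using i2 by simp
    show "AE Y in P. (\<integral>x. \<phi> (Y(x0 := x)) \<partial>UU) \<le> (\<integral>x. \<phi> (Y(x0 := x + \<delta>)) \<partial>UU) + R * \<delta>"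
    proof (rule AE_I2)
      fix Y assume Y: "Y \<in> space P"
      have "(\<lambda>x. Y(x0 := x)) \<in> measurable borel (dither X)"
        using Y unfolding dither_def XI P_def by measurable
      then have "(\<lambda>x. \<phi> (Y(x0 := x))) \<in> borel_measurable borel" by measurable
      from shift1[OF this _ d, of R] b show "(\<integral>x. \<phi> (Y(x0 := x)) \<partial>UU) \<le> (\<integral>x. \<phi> (Y(x0 := x + \<delta>)) \<partial>UU) + R * \<delta>"
        by simp
    qed
  qed
  also have "\<dots> = (\<integral>Y. (\<integral>x. \<phi> (Y(x0 := x + \<delta>)) \<partial>UU) \<partial>P) + R * \<delta>"
    using i2 P.prob_space by (simp add: P.emeasure_space_1)
  finally show ?thesis using e1 e2 by simp
qed

lemma shift_meas:
  assumes X: "x0 \<in> X"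
  shows "(\<lambda>u. u(x0 := u x0 + \<delta>)) \<in> measurable (dither X) (dither X)"
proof -
have "(\<lambda>w i. (w(x0 := w x0 + \<delta>)) i) \<in> measurable (PiM X (\<lambda>_. UU)) (PiM X (\<lambda>_. UU))"
proof (rule measurable_PiM_single')
  fix i assume "i \<in> X"
  show "(\<lambda>w. (w(x0 := w x0 + \<delta>)) i) \<in> measurable (PiM X (\<lambda>_. UU)) UU"
  proof (cases "i = x0")
    case True then show ?thesis using X by simp
  next
    case False then show ?thesis using \<open>i \<in> X\<close> by simp
  qed
next
  show "(\<lambda>w i. (w(x0 := w x0 + \<delta>)) i) \<in> space (PiM X (\<lambda>_. UU)) \<rightarrow> (\<Pi>\<^sub>E i\<in>X. space UU)"
    using X by (auto simp: space_PiM PiE_iff extensional_def)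
qed
then show ?thesis by (simp add: dither_def fun_upd_def)
  qed

lemma AE_G: "finite X \<Longrightarrow> AE u in dither X. \<forall>x\<in>X. 0 < u x \<and> u x \<le> 1"
proof -
  assume fin: "finite X"
  have U: "AE s in UU. 0 < s \<and> s \<le> 1"
    using AE_lborel_singleton[of "0::real"]
    by (subst AE_uniform_measure) (auto simp: emeasure_lborel_Icc_eq elim!: eventually_mono)
  have "\<forall>x\<in>X. AE u in dither X. 0 < u x \<and> u x \<le> 1"
  proof
    fix x assume "x \<in> X"
    show "AE u in dither X. 0 < u x \<and> u x \<le> 1"
      unfolding dither_def by (rule AE_PiM_component[where P="\<lambda>s. 0 < s \<and> s \<le> 1"]) (rule prob_UU, rule \<open>x \<in> X\<close>, rule U)
  qed
  then show ?thesis by (subst AE_finite_all[OF fin]) blast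
qed

lemma prob_dither_seq: "prob_space (dither_seq X n)"
  unfolding dither_seq_def by (rule prob_space_PiM) (rule prob_dither)

lemma marg_distr: "t \<in> {1..n} \<Longrightarrow> distr (dither_seq X n) (dither X) (\<lambda>U. U t) = dither X"
  unfolding dither_seq_def by (rule distr_PiM_component) (auto intro: prob_dither)

lemma marg_meas[measurable]: "t \<in> {1..n} \<Longrightarrow> (\<lambda>U. U t) \<in> measurable (dither_seq X n) (dither X)"
  unfolding dither_seq_def by simp

lemma marg_integral:
  fixes F :: "('x \<Rightarrow> real) \<Rightarrow> real"
  assumes t: "t \<in> {1..n}" and [measurable]: "F \<in> borel_measurable (dither X)"
  shows "(\<integral>U. F (U t) \<partial>dither_seq X n) = integral\<^sup>L (dither X) F"
  using integral_distr[OF marg_meas[OF t], of F] by (simp add: marg_distr[OF t])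

lemma marg_integrable:
  fixes F :: "('x \<Rightarrow> real) \<Rightarrow> real"
  assumes t: "t \<in> {1..n}" and [measurable]: "F \<in> borel_measurable (dither X)"
    and "integrable (dither X) F"
  shows "integrable (dither_seq X n) (\<lambda>U. F (U t))"
  using integrable_distr_eq[OF marg_meas[OF t], of F] assms by (simp add: marg_distr[OF t])

lemma Ncount_0[simp]: "Ncount xs 0 x = 0"
  by (simp add: Ncount_def)

lemma Ncount_Suc: "Ncount xs (Suc t) x = Ncount xs t x + (if xs (Suc t) = x then 1 else 0)"
proof -
  have "{i\<in>{1..Suc t}. xs i = x} = {i\<in>{1..t}. xs i = x} \<union> (if xs (Suc t) = x then {Suc t} else {})"
    by (auto simp: le_Suc_eq)
  then show ?thesis unfolding Ncount_def by (auto simp: card_insert_if)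
qed

lemma Ncount_sum:
  fixes g :: "'x \<Rightarrow> real"
  assumes "finite X" "\<forall>s\<in>{1..t}. xs s \<in> X"
  shows "(\<Sum>x\<in>X. real (Ncount xs t x) * g x) = (\<Sum>s=1..t. g (xs s))"
  using assms(2)
proof (induction t)
  case 0 then show ?case by simp
next
  case (Suc t)
  have "(\<Sum>x\<in>X. real (Ncount xs (Suc t) x) * g x) = (\<Sum>x\<in>X. real (Ncount xs t x) * g x) + (\<Sum>x\<in>X. (if xs (Suc t) = x then g x else 0))"
    by (subst sum.distrib[symmetric], rule sum.cong) (auto simp: Ncount_Suc algebra_simps)
  also have "(\<Sum>x\<in>X. (if xs (Suc t) = x then g x else 0)) = g (xs (Suc t))"
    using Suc.prems assms(1) by (simp add: sum.delta)
  finally show ?case using Suc by simp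
qed

lemma sel_props:
  assumes "selector X B l sel" "weights_ok X w"
  shows "sel w \<in> B" "\<And>b. b \<in> B \<Longrightarrow> wloss X l w (sel w) \<le> wloss X l w b" "sel w \<in> Bopt X B l"
  using assms unfolding selector_def argmin_set_def Bopt_def by auto

lemma Bopt_le_R:
  assumes "bdd_above {l b x | b x. b \<in> Bopt X B l \<and> x \<in> X}" "b \<in> Bopt X B l" "x \<in> X"
  shows "l b x \<le> Rbound X B l"
  unfolding Rbound_def by (rule cSup_upper) (use assms in auto)

lemma Pu_weights_ok:
  assumes fin: "finite X" and ne: "X \<noteq> {}" and t: "1 \<le> t" and h: "0 < h t" and u: "\<forall>x\<in>X. 0 < u x"
  shows "weights_ok X (Pu X h xs t u)"
proof -
  have "0 < (\<Sum>x\<in>X. u x)" using u fin ne by (intro sum_pos) auto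
  then have D: "0 < real (t - 1) + h t * (\<Sum>x\<in>X. u x)" using h by (simp add: add_nonneg_pos)
  have num: "x \<in> X \<Longrightarrow> 0 < real (Ncount xs (t - 1) x) + h t * u x" for x using h u by (simp add: add_nonneg_pos)
  obtain x0 where "x0 \<in> X" using ne by auto
  then show ?thesis unfolding weights_ok_def Pu_def using D num
    by (auto intro!: bexI[of _ x0] less_imp_le)
qed

lemma sum_upd:
  fixes u :: "'x \<Rightarrow> real"
  assumes "finite X" "x0 \<in> X"
  shows "(\<Sum>x\<in>X. (u(x0 := u x0 + d)) x) = (\<Sum>x\<in>X. u x) + d"
proof -
  have "(\<Sum>x\<in>X. (u(x0 := u x0 + d)) x) = (\<Sum>x\<in>X. u x + (if x = x0 then d else 0))"
    by (rule sum.cong) auto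
  also have "\<dots> = (\<Sum>x\<in>X. u x) + d" using assms by (simp add: sum.distrib sum.delta')
  finally show ?thesis .
qed

lemma Pu_shift:
  assumes fin: "finite X" and xt: "xs t \<in> X" and t: "1 \<le> t" and h: "0 < h t"
  shows "Pu X h xs t (u(xs t := u (xs t) + 1 / h t)) =
     (\<lambda>x\<in>X. (real (Ncount xs t x) + h t * u x) / (real t + h t * (\<Sum>x\<in>X. u x)))"
proof -
  obtain t' where t': "t = Suc t'" using t by (cases t) auto
  have den: "real (t - 1) + h t * (\<Sum>x\<in>X. (u(xs t := u (xs t) + 1 / h t)) x) = real t + h t * (\<Sum>x\<in>X. u x)"
    using sum_upd[OF fin xt, of u "1 / h t"] h t' by (simp add: algebra_simps)
  have num: "real (Ncount xs (t - 1) x) + h t * (u(xs t := u (xs t) + 1 / h t)) x = real (Ncount xs t x) + h t * u x" for x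
    using h t' by (auto simp: Ncount_Suc algebra_simps)
  show ?thesis unfolding Pu_def den num ..
qed

lemma btl:
  assumes sel: "selector X B l sel" and fin: "finite X"
    and nn: "\<forall>b\<in>Bopt X B l. \<forall>x\<in>X. 0 \<le> l b x"
    and hpos: "\<forall>t\<ge>1. 0 < h t" and hmono: "\<forall>s t. 1 \<le> s \<longrightarrow> s \<le> t \<longrightarrow> h s \<le> h t"
    and xsX: "\<forall>t\<in>{1..n}. xs t \<in> X" and u0: "\<forall>x\<in>X. 0 \<le> u x"
    and b: "b \<in> B" and n: "1 \<le> n"
  shows "(\<Sum>t=1..n. l (sel (Pu X h xs t (u(xs t := u (xs t) + 1 / h t)))) (xs t))
     \<le> (\<Sum>s=1..n. l b (xs s)) + h n * (\<Sum>x\<in>X. u x * l b x)"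
proof -
  define bt where "bt t = sel (Pu X h xs t (u(xs t := u (xs t) + 1 / h t)))" for t
  define \<Phi> where "\<Phi> t b = (\<Sum>s=1..t. l b (xs s)) + h t * (\<Sum>x\<in>X. u x * l b x)" for t b
  have key: "bt t \<in> B \<and> bt t \<in> Bopt X B l \<and> (\<forall>b\<in>B. \<Phi> t (bt t) \<le> \<Phi> t b)" if t: "t \<in> {1..n}" for t
  proof -
    have ht: "0 < h t" using hpos t by auto
    have xt: "xs t \<in> X" using xsX t by auto
    define D where "D = real t + h t * (\<Sum>x\<in>X. u x)"
    have "0 \<le> h t * (\<Sum>x\<in>X. u x)" using ht u0 by (intro mult_nonneg_nonneg sum_nonneg) auto
    then have D: "0 < D" unfolding D_def using t by simp
    define W where "W = (\<lambda>x\<in>X. (real (Ncount xs t x) + h t * u x) / D)"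
    have PW: "Pu X h xs t (u(xs t := u (xs t) + 1 / h t)) = W"
      unfolding W_def D_def using Pu_shift[of X xs t h u] fin xt ht t by simp
    have N1: "1 \<le> Ncount xs t (xs t)"
    proof -
      obtain t' where "t = Suc t'" using t by (cases t) auto
      then show ?thesis by (simp add: Ncount_Suc)
    qed
    have "0 \<le> h t * u (xs t)" using ht u0 xt by simp
    then have "0 < (real (Ncount xs t (xs t)) + h t * u (xs t)) / D" using N1 D by simp
    moreover have "0 \<le> (real (Ncount xs t x) + h t * u x) / D" if "x \<in> X" for x
      using ht u0 that D by simp
    ultimately have wok: "weights_ok X W" unfolding weights_ok_def W_def
      using xt by auto
    have wl: "wloss X l W b = \<Phi> t b / D" for b
    proof -
      have "wloss X l W b = (\<Sum>x\<in>X. (real (Ncount xs t x) * l b x + h t * (u x * l b x)) / D)"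
        unfolding wloss_def W_def by (rule sum.cong) (auto simp: algebra_simps)
      also have "\<dots> = ((\<Sum>x\<in>X. real (Ncount xs t x) * l b x) + h t * (\<Sum>x\<in>X. u x * l b x)) / D"
        by (simp add: sum_divide_distrib[symmetric] sum.distrib sum_distrib_left)
      also have "(\<Sum>x\<in>X. real (Ncount xs t x) * l b x) = (\<Sum>s=1..t. l b (xs s))"
        by (rule Ncount_sum[OF fin]) (use xsX t in auto)
      finally show ?thesis unfolding \<Phi>_def .
    qed
    have "bt t \<in> B" "bt t \<in> Bopt X B l" using sel_props[OF sel wok] PW bt_def by auto
    moreover have "\<Phi> t (bt t) \<le> \<Phi> t b" if "b \<in> B" for b
    proof -
      have "wloss X l W (bt t) \<le> wloss X l W b" using sel_props(2)[OF sel wok that] PW bt_def by simp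
      then show ?thesis unfolding wl using D by (simp add: divide_right_mono_neg divide_le_cancel)
    qed
    ultimately show ?thesis by blast
  qed
  have ul: "0 \<le> (\<Sum>x\<in>X. u x * l b x)" if "b \<in> Bopt X B l" for b
    using nn u0 that by (intro sum_nonneg) auto
  have ind: "m \<in> {1..n} \<Longrightarrow> (\<Sum>t=1..m. l (bt t) (xs t)) \<le> \<Phi> m (bt m)" for m
  proof (induction m)
    case 0 then show ?case by simp
  next
    case (Suc m)
    show ?case
    proof (cases "m = 0")
      case True
      have a1: "0 \<le> (\<Sum>x\<in>X. u x * l (bt 1) x)" using key[of 1] Suc.prems ul by auto
      have "0 < h 1" using hpos by auto
      then have "0 \<le> h 1 * (\<Sum>x\<in>X. u x * l (bt 1) x)" using a1 by simp
      then show ?thesis using True by (simp add: \<Phi>_def)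
    next
      case False
      then have m: "m \<in> {1..n}" using Suc.prems by auto
      have bm: "bt (Suc m) \<in> B" "bt (Suc m) \<in> Bopt X B l" using key[OF Suc.prems] by auto
      have "(\<Sum>t=1..Suc m. l (bt t) (xs t)) = (\<Sum>t=1..m. l (bt t) (xs t)) + l (bt (Suc m)) (xs (Suc m))"
        by simp
      also have "\<dots> \<le> \<Phi> m (bt m) + l (bt (Suc m)) (xs (Suc m))" using Suc.IH[OF m] by simp
      also have "\<dots> \<le> \<Phi> m (bt (Suc m)) + l (bt (Suc m)) (xs (Suc m))" using key[OF m] bm by auto
      also have "\<dots> \<le> \<Phi> (Suc m) (bt (Suc m))"
      proof -
        have "h m \<le> h (Suc m)" using hmono m by auto
        then have "h m * (\<Sum>x\<in>X. u x * l (bt (Suc m)) x) \<le> h (Suc m) * (\<Sum>x\<in>X. u x * l (bt (Suc m)) x)"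
          using ul[OF bm(2)] by (rule mult_right_mono)
        then show ?thesis unfolding \<Phi>_def by simp
      qed
      finally show ?thesis .
    qed
  qed
  have "(\<Sum>t=1..n. l (bt t) (xs t)) \<le> \<Phi> n (bt n)" using ind n by simp
  also have "\<dots> \<le> \<Phi> n b" using key[of n] n b by auto
  finally show ?thesis unfolding bt_def \<Phi>_def .
qed

lemma shift_wok:
  assumes fin: "finite X" and xt: "xs t \<in> X" and t: "1 \<le> t" and ht: "0 < h t" and u0: "\<forall>x\<in>X. 0 \<le> u x"
  shows "weights_ok X (Pu X h xs t (u(xs t := u (xs t) + 1 / h t)))"
proof -
  define D where "D = real t + h t * (\<Sum>x\<in>X. u x)"
  have "0 \<le> h t * (\<Sum>x\<in>X. u x)" using ht u0 by (intro mult_nonneg_nonneg sum_nonneg) auto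
  then have D: "0 < D" unfolding D_def using t by simp
  have N1: "1 \<le> Ncount xs t (xs t)"
  proof -
    obtain t' where "t = Suc t'" using t by (cases t) auto
    then show ?thesis by (simp add: Ncount_Suc)
  qed
  have "0 \<le> h t * u (xs t)" using ht u0 xt by simp
  then have "0 < (real (Ncount xs t (xs t)) + h t * u (xs t)) / D" using N1 D by simp
  moreover have "0 \<le> (real (Ncount xs t x) + h t * u x) / D" if "x \<in> X" for x
    using ht u0 that D by simp
  moreover have "Pu X h xs t (u(xs t := u (xs t) + 1 / h t)) = (\<lambda>x\<in>X. (real (Ncount xs t x) + h t * u x) / D)"
    unfolding D_def by (rule Pu_shift[of X xs t h u]) (use fin xt t ht in auto)
  ultimately show ?thesis unfolding weights_ok_def using xt by auto
qed

lemma integrable_AE_bdd: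
  fixes F :: "('x \<Rightarrow> real) \<Rightarrow> real"
  assumes "F \<in> borel_measurable (dither X)" "AE u in dither X. 0 \<le> F u \<and> F u \<le> R"
  shows "integrable (dither X) F"
proof -
  interpret prob_space "dither X" by (rule prob_dither)
  have "AE u in dither X. norm (F u) \<le> R" using assms(2) by eventually_elim auto
  then show ?thesis using assms(1) by (rule integrable_const_bound)
qed

lemma Lstar_eq:
  assumes sel: "selector X B l sel" and fin: "finite X" and n: "1 \<le> n" and xsX: "\<forall>t\<in>{1..n}. xs t \<in> X"
  defines "bs \<equiv> sel (\<lambda>x. real (Ncount xs n x))"
  shows "Lstar B l xs n = (\<Sum>s=1..n. l bs (xs s))" "bs \<in> B" "bs \<in> Bopt X B l"
proof -
  have "1 \<in> {i\<in>{1..n}. xs i = xs 1}" using n by auto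
  then have "0 < Ncount xs n (xs 1)" unfolding Ncount_def by (subst card_gt_0_iff) auto
  then have wok: "weights_ok X (\<lambda>x. real (Ncount xs n x))"
    unfolding weights_ok_def using xsX n by (auto intro!: bexI[of _ "xs 1"])
  have wl: "wloss X l (\<lambda>x. real (Ncount xs n x)) b = (\<Sum>s=1..n. l b (xs s))" for b
    unfolding wloss_def by (rule Ncount_sum[OF fin xsX])
  show B: "bs \<in> B" "bs \<in> Bopt X B l" using sel_props[OF sel wok] bs_def by auto
  show "Lstar B l xs n = (\<Sum>s=1..n. l bs (xs s))"
    unfolding Lstar_def
    by (rule cInf_eq_minimum) (use B sel_props(2)[OF sel wok] in \<open>auto simp: wl bs_def\<close>)
qed

lemma regret_upper:
  assumes sel: "selector X B l sel" and fin: "finite X" and ne: "X \<noteq> {}"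
    and bdd: "bdd_above {l b x | b x. b \<in> Bopt X B l \<and> x \<in> X}"
    and nn: "\<forall>b\<in>Bopt X B l. \<forall>x\<in>X. 0 \<le> l b x"
    and hpos: "\<forall>t\<ge>1. 0 < h t" and hmono: "\<forall>s t. 1 \<le> s \<longrightarrow> s \<le> t \<longrightarrow> h s \<le> h t"
    and n: "1 \<le> n" and xsX: "\<forall>t\<in>{1..n}. xs t \<in> X"
  shows "exp_regret X B l sel h xs n \<le> Rbound X B l * (\<Sum>t=1..n. 1 / h t) + Rbound X B l * real (card X) * h n"
    and "exp_regret X B l sel h xs n = (\<Sum>t=1..n. \<integral>u. l (sel (Pu X h xs t u)) (xs t) \<partial>dither X) - Lstar B l xs n"
    and "\<And>t. t \<in> {1..n} \<Longrightarrow> AE u in dither X. sel (Pu X h xs t u) \<in> B"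
    and "\<And>t. t \<in> {1..n} \<Longrightarrow> integrable (dither X) (\<lambda>u. l (sel (Pu X h xs t u)) (xs t))"
proof -
  define R where "R = Rbound X B l"
  define f where "f t u = l (sel (Pu X h xs t u)) (xs t)" for t u
  define S where "S t u = u(xs t := u (xs t) + 1 / h t)" for t and u :: "'a \<Rightarrow> real"
  interpret D: prob_space "dither X" by (rule prob_dither)
  interpret DS: prob_space "dither_seq X n" by (rule prob_dither_seq)
  obtain x0 where x0: "x0 \<in> X" using ne by auto
  have "weights_ok X (\<lambda>_. 1)" unfolding weights_ok_def using x0 by auto
  from sel_props(3)[OF sel this] have R0: "0 \<le> R"
    using nn x0 Bopt_le_R[OF bdd _ x0] unfolding R_def by (meson order_trans)
  have fm[measurable]: "f t \<in> borel_measurable (dither X)" if "t \<in> {1..n}" for t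
    using sel that xsX hpos unfolding selector_def f_def by auto
  have Sm: "(\<lambda>u. f t (S t u)) \<in> borel_measurable (dither X)" if "t \<in> {1..n}" for t
    using measurable_compose[OF shift_meas[of "xs t" X "1 / h t"] fm[OF that]] xsX that
    unfolding S_def by (simp add: comp_def)
  have inB: "AE u in dither X. sel (Pu X h xs t u) \<in> B \<and> 0 \<le> f t u \<and> f t u \<le> R" if t: "t \<in> {1..n}" for t
    using AE_G[OF fin]
  proof eventually_elim
    case (elim u)
    have "weights_ok X (Pu X h xs t u)" using Pu_weights_ok[OF fin ne, of t h u xs] elim t hpos by auto
    from sel_props[OF sel this] show ?case
      using nn xsX t Bopt_le_R[OF bdd] unfolding f_def R_def by auto
  qed
  then show "\<And>t. t \<in> {1..n} \<Longrightarrow> AE u in dither X. sel (Pu X h xs t u) \<in> B"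
    by (auto elim: eventually_mono)
  have fb: "AE u in dither X. 0 \<le> f t u \<and> f t u \<le> R" if "t \<in> {1..n}" for t
    using inB[OF that] by (auto elim: eventually_mono)
  have Sb: "AE u in dither X. 0 \<le> f t (S t u) \<and> f t (S t u) \<le> R" if t: "t \<in> {1..n}" for t
    using AE_G[OF fin]
  proof eventually_elim
    case (elim u)
    have u0: "\<forall>x\<in>X. 0 \<le> u x" using elim by (auto intro: less_imp_le)
    have "weights_ok X (Pu X h xs t (S t u))" unfolding S_def
      using shift_wok[OF fin, of xs t h u] u0 t hpos xsX by auto
    from sel_props[OF sel this] show ?case
      using nn xsX t Bopt_le_R[OF bdd] unfolding f_def R_def by auto
  qed
  have fi: "integrable (dither X) (f t)" if "t \<in> {1..n}" for t
    using integrable_AE_bdd[OF fm[OF that] fb[OF that]] .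
  then show "\<And>t. t \<in> {1..n} \<Longrightarrow> integrable (dither X) (\<lambda>u. l (sel (Pu X h xs t u)) (xs t))"
    unfolding f_def .
  have Si: "integrable (dither X) (\<lambda>u. f t (S t u))" if "t \<in> {1..n}" for t
    using integrable_AE_bdd[OF Sm[OF that] Sb[OF that]] .
  have Eq: "exp_regret X B l sel h xs n = (\<Sum>t=1..n. integral\<^sup>L (dither X) (f t)) - Lstar B l xs n"
  proof -
    have ii: "integrable (dither_seq X n) (\<lambda>U. f t (U t))" if "t \<in> {1..n}" for t
      using marg_integrable[OF that fm[OF that] fi[OF that]] .
    have "exp_regret X B l sel h xs n = (\<integral>U. (\<Sum>t=1..n. f t (U t)) - Lstar B l xs n \<partial>dither_seq X n)"
      unfolding exp_regret_def Lhat_def f_def ..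
    also have "\<dots> = (\<integral>U. (\<Sum>t=1..n. f t (U t)) \<partial>dither_seq X n) - Lstar B l xs n"
      using ii by (subst Bochner_Integration.integral_diff) (auto simp: DS.prob_space)
    also have "(\<integral>U. (\<Sum>t=1..n. f t (U t)) \<partial>dither_seq X n) = (\<Sum>t=1..n. \<integral>U. f t (U t) \<partial>dither_seq X n)"
      using ii by (subst Bochner_Integration.integral_sum) auto
    also have "\<dots> = (\<Sum>t=1..n. integral\<^sup>L (dither X) (f t))"
      by (rule sum.cong) (auto intro!: marg_integral)
    finally show ?thesis .
  qed
  then show "exp_regret X B l sel h xs n = (\<Sum>t=1..n. \<integral>u. l (sel (Pu X h xs t u)) (xs t) \<partial>dither X) - Lstar B l xs n"
    unfolding f_def .
  have step: "integral\<^sup>L (dither X) (f t) \<le> (\<integral>u. f t (S t u) \<partial>dither X) + R * (1 / h t)" if t: "t \<in> {1..n}" for t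
  proof -
    define g where "g u = max 0 (min R (f t u))" for u
    have gm: "g \<in> borel_measurable (dither X)" unfolding g_def using fm[OF t] by measurable
    have "integral\<^sup>L (dither X) (f t) = integral\<^sup>L (dither X) g"
      by (rule integral_cong_AE) (use fm[OF t] gm fb[OF t] in \<open>auto simp: g_def elim: eventually_mono\<close>)
    also have "\<dots> \<le> (\<integral>u. g (u(xs t := u (xs t) + 1 / h t)) \<partial>dither X) + R * (1 / h t)"
      by (rule shiftPi) (use gm xsX t hpos R0 in \<open>auto simp: g_def\<close>)
    also have "(\<integral>u. g (u(xs t := u (xs t) + 1 / h t)) \<partial>dither X) = (\<integral>u. f t (S t u) \<partial>dither X)"
    proof (rule integral_cong_AE)
      show "(\<lambda>u. g (u(xs t := u (xs t) + 1 / h t))) \<in> borel_measurable (dither X)"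
        using measurable_compose[OF shift_meas[of "xs t" X "1 / h t"] gm] xsX t by (simp add: comp_def)
      show "(\<lambda>u. f t (S t u)) \<in> borel_measurable (dither X)" by (rule Sm[OF t])
      show "AE u in dither X. g (u(xs t := u (xs t) + 1 / h t)) = f t (S t u)"
        using Sb[OF t] by eventually_elim (auto simp: g_def S_def)
    qed
    finally show ?thesis .
  qed
  define bs where "bs = sel (\<lambda>x. real (Ncount xs n x))"
  note LS = Lstar_eq[OF sel fin n xsX, folded bs_def]
  have "(\<Sum>t=1..n. \<integral>u. f t (S t u) \<partial>dither X) = (\<integral>u. (\<Sum>t=1..n. f t (S t u)) \<partial>dither X)"
    using Si by (subst Bochner_Integration.integral_sum) auto
  also have "\<dots> \<le> (\<integral>u. Lstar B l xs n + h n * (real (card X) * R) \<partial>dither X)"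
  proof (rule integral_mono_AE)
    show "integrable (dither X) (\<lambda>u. \<Sum>t = 1..n. f t (S t u))" using Si by auto
    show "integrable (dither X) (\<lambda>u. Lstar B l xs n + h n * (real (card X) * R))" by simp
    show "AE u in dither X. (\<Sum>t = 1..n. f t (S t u)) \<le> Lstar B l xs n + h n * (real (card X) * R)"
      using AE_G[OF fin]
    proof eventually_elim
      case (elim u)
      have "(\<Sum>t = 1..n. f t (S t u)) \<le> (\<Sum>s=1..n. l bs (xs s)) + h n * (\<Sum>x\<in>X. u x * l bs x)"
        unfolding f_def S_def by (rule btl[OF sel fin nn hpos hmono xsX _ LS(2) n]) (use elim in \<open>auto intro: less_imp_le\<close>)
      also have "(\<Sum>x\<in>X. u x * l bs x) \<le> (\<Sum>x\<in>X. R)"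
      proof (rule sum_mono)
        fix x assume x: "x \<in> X"
        have "0 \<le> l bs x" "l bs x \<le> R" using nn LS(3) x Bopt_le_R[OF bdd LS(3) x] unfolding R_def by auto
        then show "u x * l bs x \<le> R" using elim x by (meson mult_left_le_one_le order_trans less_imp_le)
      qed
      then have "h n * (\<Sum>x\<in>X. u x * l bs x) \<le> h n * (real (card X) * R)"
        using hpos n by (intro mult_left_mono) auto
      finally show ?case using LS(1) by simp
    qed
  qed
  also have "\<dots> = Lstar B l xs n + h n * (real (card X) * R)" by (simp add: D.prob_space)
  finally have main: "(\<Sum>t=1..n. \<integral>u. f t (S t u) \<partial>dither X) \<le> Lstar B l xs n + h n * (real (card X) * R)" .
  have "(\<Sum>t=1..n. integral\<^sup>L (dither X) (f t)) \<le> (\<Sum>t=1..n. (\<integral>u. f t (S t u) \<partial>dither X) + R * (1 / h t))"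
    by (rule sum_mono) (rule step, simp)
  also have "\<dots> = (\<Sum>t=1..n. \<integral>u. f t (S t u) \<partial>dither X) + R * (\<Sum>t=1..n. 1 / h t)"
    by (simp add: sum.distrib sum_distrib_left)
  finally show "exp_regret X B l sel h xs n \<le> Rbound X B l * (\<Sum>t=1..n. 1 / h t) + Rbound X B l * real (card X) * h n"
    using Eq main unfolding R_def by (simp add: algebra_simps)
qed

lemma R_nonneg:
  assumes sel: "selector X B l sel" and ne: "X \<noteq> {}"
    and bdd: "bdd_above {l b x | b x. b \<in> Bopt X B l \<and> x \<in> X}"
    and nn: "\<forall>b\<in>Bopt X B l. \<forall>x\<in>X. 0 \<le> l b x"
  shows "0 \<le> Rbound X B l"
proof -
  obtain x0 where x0: "x0 \<in> X" using ne by auto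
  have "weights_ok X (\<lambda>_. 1)" unfolding weights_ok_def using x0 by auto
  from sel_props(3)[OF sel this] show ?thesis
    using nn x0 Bopt_le_R[OF bdd _ x0] by (meson order_trans)
qed

lemma regret_lower:
  assumes sel: "selector X B l sel" and fin: "finite X" and ne: "X \<noteq> {}"
    and bdd: "bdd_above {l b x | b x. b \<in> Bopt X B l \<and> x \<in> X}"
    and nn: "\<forall>b\<in>Bopt X B l. \<forall>x\<in>X. 0 \<le> l b x"
    and hpos: "\<forall>t\<ge>1. 0 < h t" and hmono: "\<forall>s t. 1 \<le> s \<longrightarrow> s \<le> t \<longrightarrow> h s \<le> h t"
    and n: "1 \<le> n" and x0: "x0 \<in> X"
  shows "0 \<le> exp_regret X B l sel h (\<lambda>t\<in>{1..n}. x0) n"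
proof -
  define xs where "xs = (\<lambda>t\<in>{1..n}. x0)"
  have xsX: "\<forall>t\<in>{1..n}. xs t \<in> X" using x0 by (simp add: xs_def)
  interpret D: prob_space "dither X" by (rule prob_dither)
  define w where "w = (\<lambda>x. if x = x0 then 1 else (0::real))"
  have wok: "weights_ok X w" unfolding weights_ok_def w_def using x0 by auto
  define bc where "bc = sel w"
  have wl: "wloss X l w b = l b x0" for b unfolding wloss_def
  proof -
    have "(\<Sum>x\<in>X. w x * l b x) = (\<Sum>x\<in>X. if x = x0 then l b x else 0)" by (rule sum.cong) (auto simp: w_def)
    then show "(\<Sum>x\<in>X. w x * l b x) = l b x0" using fin x0 by (simp add: sum.delta')
  qed
  have bcB: "bc \<in> B" and bcmin: "\<And>b. b \<in> B \<Longrightarrow> l bc x0 \<le> l b x0"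
    using sel_props[OF sel wok] wl unfolding bc_def by auto
  note U = regret_upper[OF sel fin ne bdd nn hpos hmono n xsX]
  have "(\<Sum>t=1..n. l bc x0) \<le> (\<Sum>t=1..n. \<integral>u. l (sel (Pu X h xs t u)) (xs t) \<partial>dither X)"
  proof (rule sum_mono)
    fix t assume t: "t \<in> {1..n}"
    have "(\<integral>u. l bc x0 \<partial>dither X) \<le> (\<integral>u. l (sel (Pu X h xs t u)) (xs t) \<partial>dither X)"
    proof (rule integral_mono_AE)
      have xt: "xs t = x0" using t by (simp add: xs_def)
      show "integrable (dither X) (\<lambda>u. l bc x0)" by simp
      show "integrable (dither X) (\<lambda>u. l (sel (Pu X h xs t u)) (xs t))" by (rule U(4)[OF t])
      show "AE u in dither X. l bc x0 \<le> l (sel (Pu X h xs t u)) (xs t)"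
        using U(3)[OF t] by eventually_elim (simp add: xt bcmin)
    qed
    then show "l bc x0 \<le> (\<integral>u. l (sel (Pu X h xs t u)) (xs t) \<partial>dither X)" by (simp add: D.prob_space)
  qed
  moreover have "Lstar B l xs n \<le> (\<Sum>t=1..n. l bc x0)"
  proof -
    have "Lstar B l xs n \<le> (\<Sum>t=1..n. l bc (xs t))" unfolding Lstar_def
    proof (rule cINF_lower[OF _ bcB])
      show "bdd_below ((\<lambda>b. \<Sum>t = 1..n. l b (xs t)) ` B)"
        by (rule bdd_belowI2[where m="\<Sum>t=1..n. l bc x0"]) (auto simp: xs_def intro!: mult_left_mono bcmin)
    qed
    then show ?thesis by (simp add: xs_def)
  qed
  ultimately have "0 \<le> exp_regret X B l sel h xs n" unfolding U(2) by linarith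
  then show ?thesis by (simp add: xs_def)
qed

lemma regret_max_bounds:
  assumes sel: "selector X B l sel" and fin: "finite X" and ne: "X \<noteq> {}"
    and bdd: "bdd_above {l b x | b x. b \<in> Bopt X B l \<and> x \<in> X}"
    and nn: "\<forall>b\<in>Bopt X B l. \<forall>x\<in>X. 0 \<le> l b x"
    and hpos: "\<forall>t\<ge>1. 0 < h t" and hmono: "\<forall>s t. 1 \<le> s \<longrightarrow> s \<le> t \<longrightarrow> h s \<le> h t"
    and n: "1 \<le> n"
  shows "0 \<le> regret_max X B l sel h n"
    and "regret_max X B l sel h n \<le> Rbound X B l * (\<Sum>t=1..n. 1 / h t) + Rbound X B l * real (card X) * h n"
proof -
  obtain x0 where x0: "x0 \<in> X" using ne by auto
  have fin': "finite ({1..n} \<rightarrow>\<^sub>E X)" using fin by (simp add: finite_PiE)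
  have mem: "(\<lambda>t\<in>{1..n}. x0) \<in> {1..n} \<rightarrow>\<^sub>E X" using x0 by auto
  have "0 \<le> exp_regret X B l sel h (\<lambda>t\<in>{1..n}. x0) n" by (rule regret_lower) fact+
  also have "\<dots> \<le> regret_max X B l sel h n" unfolding regret_max_def
    by (rule Max_ge) (use fin' mem in auto)
  finally show "0 \<le> regret_max X B l sel h n" .
  show "regret_max X B l sel h n \<le> Rbound X B l * (\<Sum>t=1..n. 1 / h t) + Rbound X B l * real (card X) * h n"
    unfolding regret_max_def
  proof (subst Max_le_iff)
    show "finite ((\<lambda>xs. exp_regret X B l sel h xs n) ` ({1..n} \<rightarrow>\<^sub>E X))" using fin' by simp
    show "(\<lambda>xs. exp_regret X B l sel h xs n) ` ({1..n} \<rightarrow>\<^sub>E X) \<noteq> {}" using mem by blast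
    show "\<forall>a\<in>(\<lambda>xs. exp_regret X B l sel h xs n) ` ({1..n} \<rightarrow>\<^sub>E X). a \<le> Rbound X B l * (\<Sum>t = 1..n. 1 / h t) + Rbound X B l * real (card X) * h n"
      using regret_upper(1)[OF sel fin ne bdd nn hpos hmono n] by (auto simp: PiE_iff)
  qed
qed

lemma powr_step:
  fixes t a :: real
  assumes t: "1 \<le> t" and a: "0 < a" "a < 1"
  shows "t powr (-a) \<le> (t powr (1 - a) - (t - 1) powr (1 - a)) / (1 - a)"
proof -
  have c: "continuous_on {t-1..t} (\<lambda>x. x powr (1 - a))"
    using t a by (intro continuous_on_powr') (auto intro: continuous_intros)
  have d: "(\<lambda>x. x powr (1 - a)) differentiable (at x)" if "t - 1 < x" for x
    using has_real_derivative_powr[of x "1 - a"] that t real_differentiable_def by force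
  obtain L z where z: "t - 1 < z" "z < t" and D: "DERIV (\<lambda>x. x powr (1 - a)) z :> L"
    and eq: "t powr (1 - a) - (t - 1) powr (1 - a) = (t - (t - 1)) * L"
    using MVT[OF _ c d] by auto
  have zp: "0 < z" using z t by simp
  have "L = (1 - a) * z powr (1 - a - 1)"
    using DERIV_unique[OF D has_real_derivative_powr[OF zp]] .
  then have L: "L = (1 - a) * z powr (-a)" by simp
  have "t powr (-a) \<le> z powr (-a)" using powr_mono2'[of "-a" z t] a zp z by simp
  then have "(1 - a) * t powr (-a) \<le> L" unfolding L using a by simp
  then show ?thesis using eq a by (simp add: field_simps)
qed

lemma sum_powr_bound:
  fixes a :: real
  assumes a: "0 < a" "a < 1"
  shows "(\<Sum>t=1..n. real t powr (-a)) \<le> real n powr (1 - a) / (1 - a)"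
proof (induction n)
  case 0 then show ?case by simp
next
  case (Suc n)
  have "real (Suc n) powr (-a) \<le> (real (Suc n) powr (1 - a) - (real (Suc n) - 1) powr (1 - a)) / (1 - a)"
    by (rule powr_step) (use a in auto)
  then have "real (Suc n) powr (-a) \<le> real (Suc n) powr (1 - a) / (1 - a) - real n powr (1 - a) / (1 - a)"
    by (simp add: diff_divide_distrib)
  then show ?case using Suc by simp
qed

lemma sum_sqrt_bound: "(\<Sum>t=1..n. 1 / sqrt (real t)) \<le> 2 * sqrt (real n)"
proof (induction n)
  case 0 then show ?case by simp
next
  case (Suc n)
  have "2 * sqrt (real n) + 1 / sqrt (real (Suc n)) \<le> 2 * sqrt (real (Suc n))"
  proof -
    have p: "0 < sqrt (real (Suc n))" by simp
    have "sqrt (real n) * sqrt (real (Suc n)) \<le> real n + 1 / 2"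
    proof -
      have "sqrt (real n) * sqrt (real (Suc n)) = sqrt (real n * real (Suc n))" by (simp add: real_sqrt_mult)
      also have "\<dots> \<le> sqrt ((real n + 1/2)^2)" by (intro real_sqrt_le_mono) (simp add: power2_eq_square algebra_simps)
      also have "\<dots> = real n + 1/2" by simp
      finally show ?thesis .
    qed
    then have "2 * sqrt (real n) * sqrt (real (Suc n)) + 1 \<le> 2 * (sqrt (real (Suc n)))^2" by simp
    then have "(2 * sqrt (real n) + 1 / sqrt (real (Suc n))) * sqrt (real (Suc n)) \<le> (2 * sqrt (real (Suc n))) * sqrt (real (Suc n))"
      using p by (simp add: algebra_simps power2_eq_square)
    then show ?thesis using p by (rule mult_right_le_imp_le)
  qed
  then show ?case using Suc by simp
qed

lemma regret_bounds_main:
  assumes sel: "selector X B l sel" and fin: "finite X" and ne: "X \<noteq> {}"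
    and bdd: "bdd_above {l b x | b x. b \<in> Bopt X B l \<and> x \<in> X}"
    and nn: "\<forall>b\<in>Bopt X B l. \<forall>x\<in>X. 0 \<le> l b x"
  shows "regret_bounds X B l sel (Rbound X B l)"
proof -
  define R where "R = Rbound X B l"
  have R0: "0 \<le> R" unfolding R_def by (rule R_nonneg[OF sel ne bdd nn])
  define c where "c = real (card X)"
  have c0: "0 < c" unfolding c_def using fin ne by (simp add: card_gt_0_iff)
  note RM = regret_max_bounds[OF sel fin ne bdd nn, folded R_def c_def]
  have P1: "regret_max X B l sel h n \<le> 2 * R * (\<Sum>t=1..n. 1 / h t) + 2 * R * c * h n"
    if hpos: "\<forall>t\<ge>1. 0 < h t" and hmono: "\<forall>s t. 1 \<le> s \<longrightarrow> s \<le> t \<longrightarrow> h s \<le> h t" and n: "1 \<le> n" for h n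
  proof -
    have "0 \<le> (\<Sum>t=1..n. 1 / h t)" using hpos by (intro sum_nonneg) auto
    then have a: "R * (\<Sum>t=1..n. 1 / h t) \<le> 2 * R * (\<Sum>t=1..n. 1 / h t)" using R0 by (simp add: mult_right_mono)
    have "0 \<le> c * h n" using c0 hpos n by auto
    then have b: "R * c * h n \<le> 2 * R * c * h n" using R0 by (simp add: mult_right_mono mult.assoc)
    show ?thesis using RM(2)[OF hpos hmono n] a b by linarith
  qed
  have P2: "(\<lambda>n. regret_max X B l sel (\<lambda>t. h1 * real t powr \<alpha>) n / real n) \<longlonglongrightarrow> 0"
    if h1: "0 < h1" and a: "0 < \<alpha>" "\<alpha> < 1" for h1 \<alpha>
  proof -
    define h where "h t = h1 * real t powr \<alpha>" for t :: nat
    have hpos: "\<forall>t\<ge>1. 0 < h t" using h1 by (auto simp: h_def)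
    have hmono: "\<forall>s t. 1 \<le> s \<longrightarrow> s \<le> t \<longrightarrow> h s \<le> h t"
      using h1 a by (auto simp: h_def intro!: mult_left_mono powr_mono2)
    define ub where "ub n = R / (h1 * (1 - \<alpha>)) * real n powr (-\<alpha>) + R * c * h1 * real n powr (\<alpha> - 1)" for n :: nat
    have lo: "0 \<le> regret_max X B l sel h n / real n" if "1 \<le> n" for n
      using RM(1)[OF hpos hmono that] by simp
    have up: "regret_max X B l sel h n / real n \<le> ub n" if n: "1 \<le> n" for n
    proof -
      have np: "0 < real n" using n by simp
      have s: "(\<Sum>t=1..n. 1 / h t) = (\<Sum>t=1..n. real t powr (-\<alpha>)) / h1"
        by (simp add: h_def sum_divide_distrib powr_minus_divide mult.commute)
      have "(\<Sum>t=1..n. 1 / h t) \<le> real n powr (1 - \<alpha>) / (1 - \<alpha>) / h1"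
        unfolding s using divide_right_mono[OF sum_powr_bound[OF a, of n], of h1] h1 by simp
      then have "regret_max X B l sel h n \<le> R * (real n powr (1 - \<alpha>) / (1 - \<alpha>) / h1) + R * c * h n"
        using RM(2)[OF hpos hmono n] R0 by (meson add_mono mult_left_mono order_trans order_refl)
      then have "regret_max X B l sel h n / real n \<le> (R * (real n powr (1 - \<alpha>) / (1 - \<alpha>) / h1) + R * c * h n) / real n"
        using np by (simp add: divide_right_mono)
      also have "\<dots> = ub n"
      proof -
        have e1: "real n powr (1 - \<alpha>) / real n = real n powr (-\<alpha>)"
          using np powr_diff[of "real n" "1 - \<alpha>" 1] by simp
        have e2: "real n powr \<alpha> / real n = real n powr (\<alpha> - 1)"
          using np powr_diff[of "real n" \<alpha> 1] by simp
        show ?thesis unfolding ub_def h_def using e1 e2 np h1 a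
          by (simp add: field_simps)
      qed
      finally show ?thesis .
    qed
    have "ub \<longlonglongrightarrow> 0" unfolding ub_def
      using a by (intro tendsto_add_zero tendsto_mult_right_zero tendsto_neg_powr filterlim_real_sequentially) auto
    then have "(\<lambda>n. regret_max X B l sel h n / real n) \<longlonglongrightarrow> 0"
      by (rule tendsto_sandwich[rotated 2, OF tendsto_const])
         (auto intro!: eventually_sequentiallyI[of 1] lo up)
    then show ?thesis unfolding h_def .
  qed
  have P3: "regret_max X B l sel (\<lambda>t. sqrt (2 * real t / c)) n / real n \<le> 4 * R * sqrt (2 * c / real n)"
    if n: "1 \<le> n" for n
  proof -
    define h where "h t = sqrt (2 * real t / c)" for t :: nat
    have hpos: "\<forall>t\<ge>1. 0 < h t" using c0 by (auto simp: h_def)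
    have hmono: "\<forall>s t. 1 \<le> s \<longrightarrow> s \<le> t \<longrightarrow> h s \<le> h t"
      using c0 by (auto simp: h_def intro!: divide_right_mono)
    define s2 where "s2 = sqrt (2::real)"
    define sc where "sc = sqrt c"
    define sn where "sn = sqrt (real n)"
    have s2: "0 < s2" "s2 * s2 = 2" unfolding s2_def by auto
    have sc: "0 < sc" "sc * sc = c" unfolding sc_def using c0 by auto
    have sn: "0 < sn" "sn * sn = real n" unfolding sn_def using n by auto
    have ht: "1 / h t = sc / s2 * (1 / sqrt (real t))" for t
      unfolding h_def s2_def sc_def by (simp add: real_sqrt_divide real_sqrt_mult)
    have "(\<Sum>t=1..n. 1 / h t) = sc / s2 * (\<Sum>t=1..n. 1 / sqrt (real t))"
      unfolding ht by (simp add: sum_distrib_left)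
    also have "\<dots> \<le> sc / s2 * (2 * sn)"
      unfolding sn_def using sum_sqrt_bound[of n] s2 sc by (intro mult_left_mono) auto
    also have "\<dots> = s2 * sc * sn"
      using s2 by (simp add: field_simps)
    finally have S: "(\<Sum>t=1..n. 1 / h t) \<le> s2 * sc * sn" .
    have H: "c * h n = s2 * sc * sn"
      unfolding h_def s2_def sc_def sn_def using c0
      by (simp add: real_sqrt_divide real_sqrt_mult field_simps)
    have "regret_max X B l sel h n \<le> R * (s2 * sc * sn) + R * (s2 * sc * sn)"
      using RM(2)[OF hpos hmono n] H mult_left_mono[OF S R0] by (simp add: mult.assoc)
    then have "regret_max X B l sel h n / real n \<le> 2 * R * (s2 * sc * sn) / real n"
      using n by (simp add: divide_right_mono)
    also have "\<dots> = 2 * R * (s2 * sc / sn)"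
      unfolding sn(2)[symmetric] using sn(1) by (simp add: field_simps)
    also have "\<dots> \<le> 4 * R * (s2 * sc / sn)"
      using R0 s2 sc sn by (intro mult_right_mono) auto
    also have "s2 * sc / sn = sqrt (2 * c / real n)"
      unfolding s2_def sc_def sn_def by (simp add: real_sqrt_divide real_sqrt_mult)
    finally show ?thesis unfolding h_def .
  qed
  show ?thesis unfolding regret_bounds_def R_def[symmetric] c_def[symmetric]
    using P1 P2 P3 by auto
qed

lemma sq_Bopt_bound:
  fixes Y :: "'a::real_inner set"
  assumes fin: "finite Y" and b: "b \<in> Bopt Y UNIV (\<lambda>b x. (norm (b - x))\<^sup>2)" and y: "y \<in> Y"
  shows "(norm (b - y))\<^sup>2 \<le> Max {(norm (x - x'))\<^sup>2 | x x'. x \<in> Y \<and> x' \<in> Y}"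
proof -
  define M where "M = Max {(norm (x - x'))\<^sup>2 | x x'. x \<in> Y \<and> x' \<in> Y}"
  have finM: "finite {(norm (x - x'))\<^sup>2 | x x'. x \<in> Y \<and> x' \<in> Y}"
  proof -
    have "{(norm (x - x'))\<^sup>2 | x x'. x \<in> Y \<and> x' \<in> Y} = (\<lambda>(x, x'). (norm (x - x'))\<^sup>2) ` (Y \<times> Y)" by auto
    then show ?thesis using fin by simp
  qed
  have leM: "(norm (x - x'))\<^sup>2 \<le> M" if "x \<in> Y" "x' \<in> Y" for x x'
    unfolding M_def by (rule Max_ge[OF finM]) (use that in auto)
  obtain w where w: "weights_ok Y w" and bmin: "\<And>b'. wloss Y (\<lambda>b x. (norm (b - x))\<^sup>2) w b \<le> wloss Y (\<lambda>b x. (norm (b - x))\<^sup>2) w b'"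
    using b unfolding Bopt_def argmin_set_def by auto
  define W where "W = (\<Sum>x\<in>Y. w x)"
  have W: "0 < W" unfolding W_def using w fin unfolding weights_ok_def
    by (metis sum_pos2)
  define m where "m = (1 / W) *\<^sub>R (\<Sum>x\<in>Y. w x *\<^sub>R x)"
  have Wm: "W *\<^sub>R m = (\<Sum>x\<in>Y. w x *\<^sub>R x)" unfolding m_def using W by simp
  have z: "(\<Sum>x\<in>Y. w x *\<^sub>R (m - x)) = 0"
    using Wm by (simp add: scaleR_diff_right sum_subtractf W_def scaleR_sum_left)
  have ident: "wloss Y (\<lambda>b x. (norm (b - x))\<^sup>2) w b' = W * (norm (b' - m))\<^sup>2 + wloss Y (\<lambda>b x. (norm (b - x))\<^sup>2) w m" for b'
  proof -
    have px: "(norm (b' - x))\<^sup>2 = (norm (b' - m))\<^sup>2 + 2 * inner (b' - m) (m - x) + (norm (m - x))\<^sup>2" for x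
    proof -
      have e: "(norm ((b' - m) + (m - x)))\<^sup>2 = (norm (b' - m))\<^sup>2 + 2 * inner (b' - m) (m - x) + (norm (m - x))\<^sup>2"
        unfolding power2_norm_eq_inner inner_add_left inner_add_right by (simp add: inner_commute)
      have "(b' - m) + (m - x) = b' - x" by simp
      then show ?thesis using e by simp
    qed
    then have "wloss Y (\<lambda>b x. (norm (b - x))\<^sup>2) w b' = (\<Sum>x\<in>Y. w x * (norm (b' - m))\<^sup>2 + 2 * inner (b' - m) (w x *\<^sub>R (m - x)) + w x * (norm (m - x))\<^sup>2)"
      unfolding wloss_def by (intro sum.cong refl) (subst px, simp add: algebra_simps)
    also have "\<dots> = W * (norm (b' - m))\<^sup>2 + 2 * inner (b' - m) (\<Sum>x\<in>Y. w x *\<^sub>R (m - x)) + wloss Y (\<lambda>b x. (norm (b - x))\<^sup>2) w m"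
      unfolding wloss_def W_def by (simp add: sum.distrib sum_distrib_left sum_distrib_right inner_sum_right)
    finally show ?thesis using z by simp
  qed
  have "W * (norm (b - m))\<^sup>2 \<le> 0" using bmin[of m] ident[of b] by simp
  then have bm: "b = m" using W by (simp add: mult_le_0_iff)
  have "norm (m - y) = norm ((1 / W) *\<^sub>R (\<Sum>x\<in>Y. w x *\<^sub>R (x - y)))"
  proof -
    have "(\<Sum>x\<in>Y. w x *\<^sub>R (x - y)) = W *\<^sub>R m - W *\<^sub>R y"
      using Wm by (simp add: scaleR_diff_right sum_subtractf W_def scaleR_sum_left)
    then show ?thesis using W by (simp add: scaleR_diff_right)
  qed
  also have "\<dots> \<le> (1 / W) * (\<Sum>x\<in>Y. w x * sqrt M)"
  proof -
    have "norm (\<Sum>x\<in>Y. w x *\<^sub>R (x - y)) \<le> (\<Sum>x\<in>Y. norm (w x *\<^sub>R (x - y)))" by (rule norm_sum)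
    also have "\<dots> \<le> (\<Sum>x\<in>Y. w x * sqrt M)"
    proof (rule sum_mono)
      fix x assume x: "x \<in> Y"
      have "norm (x - y) \<le> sqrt M" using leM[OF x y] by (simp add: real_le_rsqrt)
      then show "norm (w x *\<^sub>R (x - y)) \<le> w x * sqrt M"
        using w x unfolding weights_ok_def by (simp add: mult_left_mono)
    qed
    finally show ?thesis using W by (simp add: divide_right_mono)
  qed
  also have "\<dots> = sqrt M" using W unfolding W_def[symmetric] sum_distrib_right[symmetric] by simp
  finally have "norm (b - y) \<le> sqrt M" using bm by simp
  then have "(norm (b - y))\<^sup>2 \<le> (sqrt M)\<^sup>2" by (simp add: power_mono)
  also have "\<dots> = M" using leM[OF y y] by simp
  finally show ?thesis unfolding M_def .
qed

lemma regret_bounds_mono: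
  assumes "regret_bounds X B l sel R" "R \<le> R'"
  shows "regret_bounds X B l sel R'"
proof -
  have m1: "2 * R * S + 2 * R * c * H \<le> 2 * R' * S + 2 * R' * c * H" if "0 \<le> S" "0 \<le> c * H" for S c H :: real
    using assms(2) that by (smt (verit) mult.assoc mult_right_mono)
  have m3: "4 * R * Q \<le> 4 * R' * Q" if "0 \<le> Q" for Q :: real
    using assms(2) that by (simp add: mult_right_mono)
  show ?thesis using assms(1) unfolding regret_bounds_def
  proof (intro conjI allI impI, goal_cases)
    case (1 h n)
    have "0 \<le> (\<Sum>t=1..n. 1 / h t)" using 1(2) by (intro sum_nonneg) auto
    moreover have "0 \<le> real (card X) * h n" using 1(2,4) by auto
    ultimately show ?case using 1 m1[of "\<Sum>t=1..n. 1 / h t" "real (card X)" "h n"] by (meson order_trans)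
  next
    case (2 h1 \<alpha>) then show ?case by blast
  next
    case (3 n) then show ?case using m3[of "sqrt (2 * real (card X) / real n)"] by (meson order_trans real_sqrt_ge_zero divide_nonneg_nonneg of_nat_0_le_iff mult_nonneg_nonneg zero_le_numeral)
  qed
qed

theorem corollary2p1:
  fixes X :: "'x set" and B :: "'b set" and l :: "'b \<Rightarrow> 'x \<Rightarrow> real"
    and sel :: "('x \<Rightarrow> real) \<Rightarrow> 'b"
  assumes "finite X" and "X \<noteq> {}"
    and "selector X B l sel"
    and "bdd_above {l b x | b x. b \<in> Bopt X B l \<and> x \<in> X}"
    and "\<forall>b\<in>Bopt X B l. \<forall>x\<in>X. 0 \<le> l b x"
  shows "regret_bounds X B l sel (Rbound X B l) \<and>
    (\<forall>(Y :: (real ^ 'd) set) sel'. finite Y \<longrightarrow> Y \<noteq> {} \<longrightarrow>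
        selector Y UNIV (\<lambda>b x. (norm (b - x))\<^sup>2) sel' \<longrightarrow>
        regret_bounds Y UNIV (\<lambda>b x. (norm (b - x))\<^sup>2) sel'
          (Max {(norm (x - x'))\<^sup>2 | x x'. x \<in> Y \<and> x' \<in> Y}))"
proof (intro conjI allI impI)
  show "regret_bounds X B l sel (Rbound X B l)"
    by (rule regret_bounds_main) (use assms in auto)
next
  fix Y :: "(real ^ 'd) set" and sel'
  assume fin: "finite Y" and ne: "Y \<noteq> {}" and sel: "selector Y UNIV (\<lambda>b x. (norm (b - x))\<^sup>2) sel'"
  define M where "M = Max {(norm (x - x'))\<^sup>2 | x x'. x \<in> Y \<and> x' \<in> Y}"
  have le: "(norm (b - y))\<^sup>2 \<le> M" if "b \<in> Bopt Y UNIV (\<lambda>b x. (norm (b - x))\<^sup>2)" "y \<in> Y" for b y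
    unfolding M_def by (rule sq_Bopt_bound[OF fin that])
  have bdd: "bdd_above {(\<lambda>b x. (norm (b - x))\<^sup>2) b x | b x. b \<in> Bopt Y UNIV (\<lambda>b x. (norm (b - x))\<^sup>2) \<and> x \<in> Y}"
    by (rule bdd_aboveI[where M=M]) (auto intro: le)
  have main: "regret_bounds Y UNIV (\<lambda>b x. (norm (b - x))\<^sup>2) sel' (Rbound Y UNIV (\<lambda>b x. (norm (b - x))\<^sup>2))"
    by (rule regret_bounds_main[OF sel fin ne bdd]) auto
  obtain y0 where y0: "y0 \<in> Y" using ne by auto
  have "weights_ok Y (\<lambda>_. 1)" unfolding weights_ok_def using y0 by auto
  from sel_props(3)[OF sel this] have nonempty: "{(\<lambda>b x. (norm (b - x))\<^sup>2) b x | b x. b \<in> Bopt Y UNIV (\<lambda>b x. (norm (b - x))\<^sup>2) \<and> x \<in> Y} \<noteq> {}"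
    using y0 by blast
  have "Rbound Y UNIV (\<lambda>b x. (norm (b - x))\<^sup>2) \<le> M"
    unfolding Rbound_def by (rule cSup_least[OF nonempty]) (auto intro: le)
  from regret_bounds_mono[OF main this] show "regret_bounds Y UNIV (\<lambda>b x. (norm (b - x))\<^sup>2) sel' M" .
qed
end
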